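(* In the setting described in the context with $N_s=3M$, let $\mathbf N=[\mathbf H,\mathbf A,\dot{\mathbf A}_\theta,\dot{\mathbf A}_\phi]\in\mathbb C^{N_t\times(K+3M)}$. Then the problem $\max\{f(\mathbf W):\mathbf W\in\mathbb C^{N_t\times(K+3M)},\ \mathrm{tr}(\mathbf W\mathbf W^H)\le P_t\}$ can be reformulated as $$\max_{\mathbf P\in\mathbb C^{(K+3M)\times(K+3M)}}\ f(\mathbf N\mathbf P)\quad\text{s.t.}\quad \mathrm{tr}(\mathbf P\mathbf P^H\mathbf N^H\mathbf N)\le P_t,$$ i.e., the two problems have the same optimal value, and $\mathbf W=\mathbf N\mathbf P$ is optimal for the former whenever $\mathbf P$ is optimal for the latter.
   Context: Positive integers $N_t,N_r,K,M,L$; channels $\mathbf h_k\in\mathbb C^{N_t}$, $\mathbf H=[\mathbf h_1,\dots,\mathbf h_K]$, noise variances $\sigma_{ck}^2>0$; $\sigma_s^2>0$; weights $\delta_c,\delta_s\ge0$; $P_t>0$. $\mathbf W=[\mathbf W_c,\mathbf W_s]$ with $\mathbf W_c=[\mathbf w_{c1},\dots,\mathbf w_{cK}]\in\mathbb C^{N_t\times K}$, $\mathbf W_s\in\mathbb C^{N_t\times N_s}$, $\mathbf R_x=\mathbf W\mathbf W^H$. Rate $R_k(\mathbf W)=\log\big(1+\frac{|\mathbf h_k^H\mathbf w_{ck}|^2}{\sum_{j\ne k}|\mathbf h_k^H\mathbf w_{cj}|^2+\|\mathbf h_k^H\mathbf W_s\|_F^2+\sigma_{ck}^2}\big)$. Sensing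 model: differentiable $\mathbf a:\mathbb R^2\to\mathbb C^{N_t}$, $\mathbf b:\mathbb R^2\to\mathbb C^{N_r}$; parameters $\theta_m,\phi_m\in\mathbb R,\alpha_m\in\mathbb C$; $\mathbf A=[\mathbf a(\theta_m,\phi_m)]_m$, $\mathbf B=[\mathbf b(\theta_m,\phi_m)]_m$, $\mathbf U=\mathrm{diag}(\alpha_m)$; $\dot{\mathbf A}_\theta,\dot{\mathbf A}_\phi,\dot{\mathbf B}_\theta,\dot{\mathbf B}_\phi$ have $m$-th columns the partial derivatives of $\mathbf a$ resp. $\mathbf b$ w.r.t. first resp. second argument at $(\theta_m,\phi_m)$. $\mathbf F(\mathbf W)=\frac{2L}{\sigma_s^2}\begin{bmatrix}\Re\mathbf F_{11}&\Re\mathbf F_{12}&\Re\mathbf F_{13}&-\Im\mathbf F_{13}\\ \Re\mathbf F_{12}^{\mathsf T}&\Re\mathbf F_{22}&\Re\mathbf F_{23}&-\Im\mathbf F_{23}\\ \Re\mathbf F_{13}^{\mathsf T}&\Re\mathbf F_{23}^{\mathsf T}&\Re\mathbf F_{33}&-\Im\mathbf F_{33}\\ -\Im\mathbf F_{13}^{\mathsf T}&-\Im\mathbf F_{23}^{\mathsf T}&-\Im\mathbf F_{33}^{\mathsf T}&\Re\mathbf F_{33}\end{bmatrix}$ with $\mathbf F_{11}=(\mathbf U\mathbf A^H\mathbf R_x\mathbf A\mathbf U^H)^{\mathsf T}\odot(\dot{\mathbf B}_\theta^H\dot{\mathbf B}_\theta)+(\mathbf U\mathbf A^H\mathbf R_x\dot{\mathbf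 A}_\theta\mathbf U^H)^{\mathsf T}\odot(\mathbf B^H\dot{\mathbf B}_\theta)+(\mathbf U\dot{\mathbf A}_\theta^H\mathbf R_x\mathbf A\mathbf U^H)^{\mathsf T}\odot(\dot{\mathbf B}_\theta^H\mathbf B)+(\mathbf U\dot{\mathbf A}_\theta^H\mathbf R_x\dot{\mathbf A}_\theta\mathbf U^H)^{\mathsf T}\odot(\mathbf B^H\mathbf B)$; $\mathbf F_{12}=(\mathbf U\mathbf A^H\mathbf R_x\mathbf A\mathbf U^H)^{\mathsf T}\odot(\dot{\mathbf B}_\theta^H\dot{\mathbf B}_\phi)+(\mathbf U\mathbf A^H\mathbf R_x\dot{\mathbf A}_\theta\mathbf U^H)^{\mathsf T}\odot(\mathbf B^H\dot{\mathbf B}_\phi)+(\mathbf U\dot{\mathbf A}_\phi^H\mathbf R_x\mathbf A\mathbf U^H)^{\mathsf T}\odot(\dot{\mathbf B}_\theta^H\mathbf B)+(\mathbf U\dot{\mathbf A}_\phi^H\mathbf R_x\dot{\mathbf A}_\theta\mathbf U^H)^{\mathsf T}\odot(\mathbf B^H\mathbf B)$; $\mathbf F_{22}$ = $\mathbf F_{11}$ with $\theta\to\phi$; $\mathbf F_{13}=(\mathbf A^H\mathbf R_x\mathbf A\mathbf U^H)^{\mathsf T}\odot(\dot{\mathbf B}_\theta^H\mathbf B)+(\mathbf A^H\mathbf R_x\dot{\mathbf A}_\theta\mathbf U^H)^{\mathsf T}\odot(\mathbf B^H\mathbf B)$; $\mathbf F_{23}$ = $\mathbf F_{13}$ with $\theta\to\phi$;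 $\mathbf F_{33}=(\mathbf A^H\mathbf R_x\mathbf A)^{\mathsf T}\odot(\mathbf B^H\mathbf B)$ ($\odot$ Hadamard). $f(\mathbf W)=\delta_c\sum_{k=1}^KR_k(\mathbf W)-\delta_s\mathrm{tr}(\mathbf F(\mathbf W)^{-1})$ (considered where $\mathbf F(\mathbf W)$ is invertible). *)

theory Defs
  imports "HOL-Analysis.Analysis" "Jordan_Normal_Form.Matrix"
begin

definition herm :: "complex mat \<Rightarrow> complex mat" where
  "herm X = transpose_mat (map_mat cnj X)"

definition mtrace :: "'a::comm_ring_1 mat \<Rightarrow> 'a" where
  "mtrace X = (\<Sum>i<dim_row X. X $$ (i, i))"

definition hprod :: "'a::times mat \<Rightarrow> 'a mat \<Rightarrow> 'a mat" where
  "hprod X Y = mat (dim_row X) (dim_col X) (\<lambda>(i, j). X $$ (i, j) * Y $$ (i, j))"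

definition minv :: "'a::comm_ring_1 mat \<Rightarrow> 'a mat" where
  "minv X = (SOME Y. Y \<in> carrier_mat (dim_row X) (dim_row X) \<and>
                     X * Y = 1\<^sub>m (dim_row X) \<and> Y * X = 1\<^sub>m (dim_row X))"

definition ReM :: "complex mat \<Rightarrow> real mat" where "ReM X = map_mat Re X"
definition ImM :: "complex mat \<Rightarrow> real mat" where "ImM X = map_mat Im X"

text \<open>A steering vector function \<open>a :: real \<times> real \<Rightarrow> nat \<Rightarrow> complex\<close> gives the
  entries \<open>a (\<theta>,\<phi>) i\<close>, \<open>i < n\<close>, of the vector \<open>a(\<theta>,\<phi>) \<in> \<complex>^n\<close>.\<close>

definition steer_mat :: "nat \<Rightarrow> nat \<Rightarrow> (real \<times> real \<Rightarrow> nat \<Rightarrow> complex)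
    \<Rightarrow> (nat \<Rightarrow> real) \<Rightarrow> (nat \<Rightarrow> real) \<Rightarrow> complex mat" where
  "steer_mat n M a \<theta> \<phi> = mat n M (\<lambda>(i, m). a (\<theta> m, \<phi> m) i)"

definition dtheta_mat :: "nat \<Rightarrow> nat \<Rightarrow> (real \<times> real \<Rightarrow> nat \<Rightarrow> complex)
    \<Rightarrow> (nat \<Rightarrow> real) \<Rightarrow> (nat \<Rightarrow> real) \<Rightarrow> complex mat" where
  "dtheta_mat n M a \<theta> \<phi> =
     mat n M (\<lambda>(i, m). vector_derivative (\<lambda>t. a (t, \<phi> m) i) (at (\<theta> m)))"

definition dphi_mat :: "nat \<Rightarrow> nat \<Rightarrow> (real \<times> real \<Rightarrow> nat \<Rightarrow> complex)
    \<Rightarrow> (nat \<Rightarrow> real) \<Rightarrow> (nat \<Rightarrow> real) \<Rightarrow> complex mat" where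
  "dphi_mat n M a \<theta> \<phi> =
     mat n M (\<lambda>(i, m). vector_derivative (\<lambda>s. a (\<theta> m, s) i) (at (\<phi> m)))"

definition diag_mat :: "nat \<Rightarrow> (nat \<Rightarrow> complex) \<Rightarrow> complex mat" where
  "diag_mat M \<alpha> = mat M M (\<lambda>(i, j). if i = j then \<alpha> i else 0)"

text \<open>The blocks F11 (with Ad = A-dot_theta, Bd = B-dot_theta; F22 with phi), F12, F13 (F23), F33.\<close>
definition Fdiag :: "complex mat \<Rightarrow> complex mat \<Rightarrow> complex mat \<Rightarrow> complex mat \<Rightarrow> complex mat
    \<Rightarrow> complex mat \<Rightarrow> complex mat" where
  "Fdiag U A B Ad Bd Rx =
     hprod (transpose_mat (U * herm A * Rx * A * herm U)) (herm Bd * Bd)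
   + hprod (transpose_mat (U * herm A * Rx * Ad * herm U)) (herm B * Bd)
   + hprod (transpose_mat (U * herm Ad * Rx * A * herm U)) (herm Bd * B)
   + hprod (transpose_mat (U * herm Ad * Rx * Ad * herm U)) (herm B * B)"

definition F12 :: "complex mat \<Rightarrow> complex mat \<Rightarrow> complex mat \<Rightarrow> complex mat \<Rightarrow> complex mat
    \<Rightarrow> complex mat \<Rightarrow> complex mat \<Rightarrow> complex mat \<Rightarrow> complex mat" where
  "F12 U A B Adt Adp Bdt Bdp Rx =
     hprod (transpose_mat (U * herm A * Rx * A * herm U)) (herm Bdt * Bdp)
   + hprod (transpose_mat (U * herm A * Rx * Adt * herm U)) (herm B * Bdp)
   + hprod (transpose_mat (U * herm Adp * Rx * A * herm U)) (herm Bdt * B)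
   + hprod (transpose_mat (U * herm Adp * Rx * Adt * herm U)) (herm B * B)"

definition F13 :: "complex mat \<Rightarrow> complex mat \<Rightarrow> complex mat \<Rightarrow> complex mat \<Rightarrow> complex mat
    \<Rightarrow> complex mat \<Rightarrow> complex mat" where
  "F13 U A B Ad Bd Rx =
     hprod (transpose_mat (herm A * Rx * A * herm U)) (herm Bd * B)
   + hprod (transpose_mat (herm A * Rx * Ad * herm U)) (herm B * B)"

definition F33 :: "complex mat \<Rightarrow> complex mat \<Rightarrow> complex mat \<Rightarrow> complex mat" where
  "F33 A B Rx = hprod (transpose_mat (herm A * Rx * A)) (herm B * B)"

definition block4 :: "nat \<Rightarrow> (nat \<Rightarrow> nat \<Rightarrow> real mat) \<Rightarrow> real mat" where
  "block4 M blk = mat (4 * M) (4 * M)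
     (\<lambda>(i, j). blk (i div M) (j div M) $$ (i mod M, j mod M))"

definition FIM :: "nat \<Rightarrow> real \<Rightarrow> nat \<Rightarrow> nat \<Rightarrow> nat
    \<Rightarrow> (real \<times> real \<Rightarrow> nat \<Rightarrow> complex) \<Rightarrow> (real \<times> real \<Rightarrow> nat \<Rightarrow> complex)
    \<Rightarrow> (nat \<Rightarrow> real) \<Rightarrow> (nat \<Rightarrow> real) \<Rightarrow> (nat \<Rightarrow> complex) \<Rightarrow> complex mat \<Rightarrow> real mat" where
  "FIM L ss2 Nt Nr M a b \<theta> \<phi> \<alpha> W =
    (let Rx = W * herm W;
         A = steer_mat Nt M a \<theta> \<phi>; B = steer_mat Nr M b \<theta> \<phi>;
         Adt = dtheta_mat Nt M a \<theta> \<phi>; Adp = dphi_mat Nt M a \<theta> \<phi>;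
         Bdt = dtheta_mat Nr M b \<theta> \<phi>; Bdp = dphi_mat Nr M b \<theta> \<phi>;
         U = diag_mat M \<alpha>;
         G11 = Fdiag U A B Adt Bdt Rx; G22 = Fdiag U A B Adp Bdp Rx;
         G12 = F12 U A B Adt Adp Bdt Bdp Rx;
         G13 = F13 U A B Adt Bdt Rx; G23 = F13 U A B Adp Bdp Rx;
         G33 = F33 A B Rx;
         blk = (\<lambda>p q.
           [[ReM G11, ReM G12, ReM G13, - ImM G13],
            [transpose_mat (ReM G12), ReM G22, ReM G23, - ImM G23],
            [transpose_mat (ReM G13), transpose_mat (ReM G23), ReM G33, - ImM G33],
            [- transpose_mat (ImM G13), - transpose_mat (ImM G23),
             - transpose_mat (ImM G33), ReM G33]] ! p ! q)
     in (2 * real L / ss2) \<cdot>\<^sub>m block4 M blk)"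

text \<open>\<open>hw H W k j = h_k^H w_j\<close>, with \<open>h_k\<close> the k-th column of H and \<open>w_j\<close> the j-th column of W.\<close>
definition hw :: "complex mat \<Rightarrow> complex mat \<Rightarrow> nat \<Rightarrow> nat \<Rightarrow> complex" where
  "hw H W k j = (\<Sum>i<dim_row H. cnj (H $$ (i, k)) * W $$ (i, j))"

text \<open>Rate of user k. W = [W_c, W_s] with W_c the first K = dim_col H columns,
  W_s the remaining columns; sc k is the noise variance sigma_ck^2.\<close>
definition rate :: "complex mat \<Rightarrow> (nat \<Rightarrow> real) \<Rightarrow> complex mat \<Rightarrow> nat \<Rightarrow> real" where
  "rate H sc W k =
     ln (1 + (cmod (hw H W k k))\<^sup>2 /
          ((\<Sum>j\<in>{..<dim_col H} - {k}. (cmod (hw H W k j))\<^sup>2)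
           + (\<Sum>j\<in>{dim_col H..<dim_col W}. (cmod (hw H W k j))\<^sup>2)
           + sc k))"

definition obj :: "real \<Rightarrow> real \<Rightarrow> complex mat \<Rightarrow> (nat \<Rightarrow> real) \<Rightarrow> nat \<Rightarrow> real \<Rightarrow> nat \<Rightarrow> nat
    \<Rightarrow> (real \<times> real \<Rightarrow> nat \<Rightarrow> complex) \<Rightarrow> (real \<times> real \<Rightarrow> nat \<Rightarrow> complex)
    \<Rightarrow> (nat \<Rightarrow> real) \<Rightarrow> (nat \<Rightarrow> real) \<Rightarrow> (nat \<Rightarrow> complex) \<Rightarrow> complex mat \<Rightarrow> real" where
  "obj dc ds H sc L ss2 Nr M a b \<theta> \<phi> \<alpha> W =
     dc * (\<Sum>k<dim_col H. rate H sc W k)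
     - ds * mtrace (minv (FIM L ss2 (dim_row H) Nr M a b \<theta> \<phi> \<alpha> W))"

definition Nmat :: "complex mat \<Rightarrow> complex mat \<Rightarrow> complex mat \<Rightarrow> complex mat \<Rightarrow> complex mat" where
  "Nmat H A Adt Adp = mat (dim_row H) (dim_col H + 3 * dim_col A)
     (\<lambda>(i, j). if j < dim_col H then H $$ (i, j)
              else if j < dim_col H + dim_col A then A $$ (i, j - dim_col H)
              else if j < dim_col H + 2 * dim_col A then Adt $$ (i, j - dim_col H - dim_col A)
              else Adp $$ (i, j - dim_col H - 2 * dim_col A))"

end

theory Submission
  imports Defs
begin


definition ip :: "nat \<Rightarrow> (nat \<Rightarrow> complex) \<Rightarrow> (nat \<Rightarrow> complex) \<Rightarrow> complex" where
  "ip m x y = (\<Sum>i<m. cnj (x i) * y i)"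

lemma ip_sum_right: "ip m x (\<lambda>i. \<Sum>k<n. V k i * c k) = (\<Sum>k<n. c k * ip m x (V k))"
  unfolding ip_def by (simp add: sum_distrib_left sum_distrib_right mult_ac) (rule sum.swap)

lemma ip_sum_left: "ip m (\<lambda>i. \<Sum>k<n. V k i * c k) y = (\<Sum>k<n. cnj (c k) * ip m (V k) y)"
  unfolding ip_def by (simp add: sum_distrib_left sum_distrib_right mult_ac) (rule sum.swap)

lemma ip_diff_scale: "ip m x (\<lambda>i. y i - t * z i) = ip m x y - t * ip m x z"
  unfolding ip_def by (simp add: algebra_simps sum_subtractf sum_distrib_left)

lemma ip_add_left: "ip m (\<lambda>i. x i + y i) z = ip m x z + ip m y z"
  unfolding ip_def by (simp add: algebra_simps sum.distrib)

lemma cnj_self: "cnj z * z = complex_of_real ((cmod z)\<^sup>2)"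
  by (simp add: mult.commute complex_mult_cnj cmod_power2)

lemma ip_self: "ip m u u = complex_of_real (\<Sum>i<m. (cmod (u i))\<^sup>2)"
  unfolding ip_def by (simp add: cnj_self)

lemma ip_self_zero: assumes "ip m u u = 0" shows "\<forall>i<m. u i = 0"
proof -
  have e: "ip m u u = complex_of_real (\<Sum>i<m. (cmod (u i))\<^sup>2)"
    by (rule ip_self)
  have "(\<Sum>i<m. (cmod (u i))\<^sup>2) = 0" using assms e by (metis of_real_eq_0_iff)
  then have "\<forall>i\<in>{..<m}. (cmod (u i))\<^sup>2 = 0"
    by (subst sum_nonneg_eq_0_iff[symmetric]) auto
  then show ?thesis by simp
qed

lemma ip_self_Re: "Re (ip m u u) = (\<Sum>i<m. (cmod (u i))\<^sup>2)"
  by (simp add: ip_self)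

lemma proj_exists: fixes n :: nat shows "\<exists>c. \<forall>l<n. ip m (V l) (\<lambda>i. w i - (\<Sum>k<n. V k i * c k)) = 0"
proof (induction n arbitrary: w)
  case 0
  show ?case by simp
next
  case (Suc n)
  obtain c where c: "\<forall>l<n. ip m (V l) (\<lambda>i. w i - (\<Sum>k<n. V k i * c k)) = 0"
    using Suc.IH by blast
  obtain d where d: "\<forall>l<n. ip m (V l) (\<lambda>i. V n i - (\<Sum>k<n. V k i * d k)) = 0"
    using Suc.IH by blast
  define r where "r = (\<lambda>i. w i - (\<Sum>k<n. V k i * c k))"
  define u where "u = (\<lambda>i. V n i - (\<Sum>k<n. V k i * d k))"
  have Vn: "V n = (\<lambda>i. u i + (\<Sum>k<n. V k i * d k))" by (auto simp: u_def)
  have ipVn: "ip m (V n) y = ip m u y + (\<Sum>k<n. cnj (d k) * ip m (V k) y)" for y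
    by (subst Vn, subst ip_add_left, simp add: ip_sum_left)
  show ?case
  proof (cases "ip m u u = 0")
    case True
    then have u0: "\<forall>i<m. u i = 0" by (rule ip_self_zero)
    have "ip m u r = 0" unfolding ip_def using u0 by simp
    then have rn: "ip m (V n) r = 0" using c by (simp add: ipVn r_def)
    define c' where "c' = c(n:=0)"
    have res: "(\<lambda>i. w i - (\<Sum>k<Suc n. V k i * c' k)) = r"
      by (auto simp: c'_def r_def intro!: sum.cong)
    show ?thesis
    proof (intro exI allI impI)
      fix l assume "l < Suc n"
      then show "ip m (V l) (\<lambda>i. w i - (\<Sum>k<Suc n. V k i * c' k)) = 0"
        unfolding res using c rn r_def by (cases "l = n") auto
    qed
  next
    case False
    define t where "t = ip m u r / ip m u u"
    define c' where "c' = (\<lambda>k. if k < n then c k - t * d k else t)"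
    have res: "(\<lambda>i. w i - (\<Sum>k<Suc n. V k i * c' k)) = (\<lambda>i. r i - t * u i)"
    proof
      fix i
      have "(\<Sum>k<Suc n. V k i * c' k) = (\<Sum>k<n. V k i * (c k - t * d k)) + V n i * t"
        by (simp add: c'_def)
      also have "\<dots> = (\<Sum>k<n. V k i * c k) - t * (\<Sum>k<n. V k i * d k) + V n i * t"
        by (simp add: algebra_simps sum_subtractf sum_distrib_left)
      finally show "w i - (\<Sum>k<Suc n. V k i * c' k) = r i - t * u i"
        by (simp add: r_def u_def algebra_simps)
    qed
    have lo: "ip m (V l) (\<lambda>i. r i - t * u i) = 0" if "l < n" for l
      using c d that by (simp add: ip_diff_scale r_def u_def)
    have hu: "ip m u (\<lambda>i. r i - t * u i) = 0"
      unfolding ip_diff_scale using False by (simp add: t_def)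
    have hi: "ip m (V n) (\<lambda>i. r i - t * u i) = 0"
      unfolding ipVn hu using lo by simp
    show ?thesis
    proof (intro exI allI impI)
      fix l assume "l < Suc n"
      then show "ip m (V l) (\<lambda>i. w i - (\<Sum>k<Suc n. V k i * c' k)) = 0"
        unfolding res using lo hi by (cases "l = n") auto
    qed
  qed
qed

lemma proj_norm: fixes n :: nat
  assumes "\<forall>l<n. ip m (V l) (\<lambda>i. w i - (\<Sum>k<n. V k i * c k)) = 0"
  shows "Re (ip m (\<lambda>i. \<Sum>k<n. V k i * c k) (\<lambda>i. \<Sum>k<n. V k i * c k)) \<le> Re (ip m w w)"
proof -
  define y where "y = (\<lambda>i. \<Sum>k<n. V k i * c k)"
  define e where "e = (\<lambda>i. w i - y i)"
  have ye: "ip m y e = 0" unfolding y_def e_def ip_sum_left using assms by (simp add: y_def)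
  have ey: "ip m e y = 0" using ye unfolding ip_def
    by (metis (no_types, lifting) complex_cnj_cnj complex_cnj_mult complex_cnj_zero_iff
        mult.commute cnj_sum sum.cong)
  have w: "w = (\<lambda>i. y i + e i)" by (auto simp: e_def)
  have "ip m w w = ip m y y + ip m y e + ip m e y + ip m e e"
    by (subst (1 2) w) (simp add: ip_def algebra_simps sum.distrib)
  then have "Re (ip m w w) = Re (ip m y y) + Re (ip m e e)" using ye ey by simp
  moreover have "Re (ip m e e) \<ge> 0" by (simp add: ip_self_Re sum_nonneg)
  ultimately show ?thesis by (simp add: y_def)
qed



lemma herm_dim[simp]: "dim_row (herm X) = dim_col X" "dim_col (herm X) = dim_row X"
  by (auto simp: herm_def)

lemma herm_index[simp]: "i < dim_col X \<Longrightarrow> j < dim_row X \<Longrightarrow> herm X $$ (i, j) = cnj (X $$ (j, i))"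
  unfolding herm_def by simp

lemma herm_carrier[simp]: assumes "X \<in> carrier_mat a b" shows "herm X \<in> carrier_mat b a"
  using carrier_matD[OF assms] by (intro carrier_matI) simp_all

lemma mult_entry: "i < dim_row A \<Longrightarrow> j < dim_col B \<Longrightarrow> dim_col A = dim_row B \<Longrightarrow>
  (A * B) $$ (i, j) = (\<Sum>k<dim_col A. A $$ (i, k) * B $$ (k, j))"
  by (simp add: scalar_prod_def atLeast0LessThan)

lemma herm_herm[simp]: "herm (herm X) = X"
  unfolding herm_def by (intro eq_matI) auto

lemma herm_mult: assumes "dim_col A = dim_row B" shows "herm (A * B) = herm B * herm A"
proof (rule eq_matI)
  fix i j assume ij: "i < dim_row (herm B * herm A)" "j < dim_col (herm B * herm A)"
  have "herm (A * B) $$ (i, j) = cnj ((A * B) $$ (j, i))" using ij by simp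
  also have "\<dots> = cnj (\<Sum>k<dim_col A. A $$ (j, k) * B $$ (k, i))"
    by (subst mult_entry) (use ij assms in auto)
  also have "\<dots> = (\<Sum>k<dim_col A. herm B $$ (i, k) * herm A $$ (k, j))"
    using ij assms by (auto simp: mult.commute intro!: sum.cong)
  also have "\<dots> = (herm B * herm A) $$ (i, j)"
    by (subst mult_entry) (use ij assms in auto)
  finally show "herm (A * B) $$ (i, j) = (herm B * herm A) $$ (i, j)" .
qed (use assms in auto)

lemma core: assumes "dim_row X = dim_row W" "dim_row Y = dim_row W"
  shows "herm X * (W * herm W) * Y = (herm X * W) * herm (herm Y * W)"
proof -
  have c1: "herm X \<in> carrier_mat (dim_col X) (dim_row W)" using assms by auto
  have c2: "W \<in> carrier_mat (dim_row W) (dim_col W)" by auto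
  have c3: "herm W \<in> carrier_mat (dim_col W) (dim_row W)" by auto
  have c4: "Y \<in> carrier_mat (dim_row W) (dim_col Y)" using assms by auto
  have "herm X * (W * herm W) * Y = (herm X * W) * herm W * Y"
    using assoc_mult_mat[OF c1 c2 c3] by simp
  also have "\<dots> = (herm X * W) * (herm W * Y)"
    by (rule assoc_mult_mat[OF mult_carrier_mat[OF c1 c2] c3 c4])
  also have "herm W * Y = herm (herm Y * W)"
    using assms by (simp add: herm_mult)
  finally show ?thesis .
qed

lemma S1: assumes "dim_row X = dim_row W" "dim_row Y = dim_row W" "dim_col Z = dim_col X"
  shows "Z * herm X * (W * herm W) * Y * V = Z * ((herm X * W) * herm (herm Y * W)) * V"
proof -
  have c0: "Z \<in> carrier_mat (dim_row Z) (dim_col X)" using assms by auto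
  have c1: "herm X \<in> carrier_mat (dim_col X) (dim_row W)" using assms by auto
  have c2: "W * herm W \<in> carrier_mat (dim_row W) (dim_row W)" by auto
  have c4: "Y \<in> carrier_mat (dim_row W) (dim_col Y)" using assms by auto
  have "Z * herm X * (W * herm W) = Z * (herm X * (W * herm W))"
    by (rule assoc_mult_mat[OF c0 c1 c2])
  then have "Z * herm X * (W * herm W) * Y = Z * (herm X * (W * herm W) * Y)"
    using assoc_mult_mat[OF c0 mult_carrier_mat[OF c1 c2] c4] by simp
  then show ?thesis using core[OF assms(1,2)] by simp
qed

lemma mtrace_comm: assumes "A \<in> carrier_mat a b" "B \<in> carrier_mat b a"
  shows "mtrace (A * B) = mtrace (B * A)"
proof -
  have "mtrace (A * B) = (\<Sum>i<a. \<Sum>k<b. A $$ (i, k) * B $$ (k, i))"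
    unfolding mtrace_def using assms by (auto intro!: sum.cong simp: mult_entry[of _ A _ B] simp del: index_mult_mat(1))
  also have "\<dots> = (\<Sum>k<b. \<Sum>i<a. B $$ (k, i) * A $$ (i, k))"
    by (subst sum.swap) (simp add: mult.commute)
  also have "\<dots> = mtrace (B * A)"
    unfolding mtrace_def using assms by (auto intro!: sum.cong simp: mult_entry[of _ B _ A] simp del: index_mult_mat(1))
  finally show ?thesis .
qed

lemma trace_feas: assumes "N \<in> carrier_mat m n" "P \<in> carrier_mat n n"
  shows "mtrace (P * herm P * herm N * N) = mtrace (N * P * herm (N * P))"
proof -
  have "mtrace (P * herm P * herm N * N) = mtrace (N * (P * herm P * herm N))"
    by (rule mtrace_comm[of _ n m]) (use assms in auto)
  also have "N * (P * herm P * herm N) = N * P * herm (N * P)"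
  proof -
    have cP: "herm P \<in> carrier_mat n n" "herm N \<in> carrier_mat n m" using assms by auto
    have "P * herm P * herm N = P * (herm P * herm N)" using assoc_mult_mat[OF assms(2) cP] .
    moreover have "N * (P * (herm P * herm N)) = N * P * (herm P * herm N)"
      using assoc_mult_mat[OF assms(1,2) mult_carrier_mat[OF cP]] by simp
    moreover have "herm (N * P) = herm P * herm N" using assms by (simp add: herm_mult)
    ultimately show ?thesis by simp
  qed
  finally show ?thesis .
qed

lemma mtrace_herm: assumes "X \<in> carrier_mat m n"
  shows "mtrace (X * herm X) = (\<Sum>j<n. ip m (\<lambda>i. X $$ (i, j)) (\<lambda>i. X $$ (i, j)))"
proof -
  have "mtrace (X * herm X) = (\<Sum>i<m. \<Sum>j<n. X $$ (i, j) * herm X $$ (j, i))"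
    unfolding mtrace_def using assms by (auto intro!: sum.cong simp: mult_entry[of _ X _ "herm X"] simp del: index_mult_mat(1))
  also have "\<dots> = (\<Sum>i<m. \<Sum>j<n. cnj (X $$ (i, j)) * X $$ (i, j))"
    using assms by (auto intro!: sum.cong simp: mult.commute)
  also have "\<dots> = (\<Sum>j<n. ip m (\<lambda>i. X $$ (i, j)) (\<lambda>i. X $$ (i, j)))"
    unfolding ip_def by (rule sum.swap)
  finally show ?thesis .
qed



theorem proposition5:
  fixes Nt Nr K M L :: nat
    and H :: "complex mat" and sc :: "nat \<Rightarrow> real" and ss2 dc ds Pt :: real
    and a b :: "real \<times> real \<Rightarrow> nat \<Rightarrow> complex"
    and \<theta> \<phi> :: "nat \<Rightarrow> real" and \<alpha> :: "nat \<Rightarrow> complex"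
  assumes pos: "Nt > 0" "Nr > 0" "K > 0" "M > 0" "L > 0"
    and H: "H \<in> carrier_mat Nt K"
    and sc: "\<forall>k<K. sc k > 0"
    and ss2: "ss2 > 0"
    and dc: "dc \<ge> 0" and ds: "ds \<ge> 0"
    and Pt: "Pt > 0"
    and a_diff: "\<forall>i<Nt. \<forall>x. (\<lambda>p. a p i) differentiable (at x)"
    and b_diff: "\<forall>i<Nr. \<forall>x. (\<lambda>p. b p i) differentiable (at x)"
  defines "f \<equiv> obj dc ds H sc L ss2 Nr M a b \<theta> \<phi> \<alpha>"
    and "N \<equiv> Nmat H (steer_mat Nt M a \<theta> \<phi>) (dtheta_mat Nt M a \<theta> \<phi>) (dphi_mat Nt M a \<theta> \<phi>)"
  defines "feas1 \<equiv> {W. W \<in> carrier_mat Nt (K + 3 * M) \<and> Re (mtrace (W * herm W)) \<le> Pt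
                     \<and> invertible_mat (FIM L ss2 Nt Nr M a b \<theta> \<phi> \<alpha> W)}"
  defines "feas2 \<equiv> {P. P \<in> carrier_mat (K + 3 * M) (K + 3 * M)
                     \<and> Re (mtrace (P * herm P * herm N * N)) \<le> Pt
                     \<and> invertible_mat (FIM L ss2 Nt Nr M a b \<theta> \<phi> \<alpha> (N * P))}"
  shows "Sup (f ` feas1) = Sup ((\<lambda>P. f (N * P)) ` feas2)
       \<and> (\<forall>P. P \<in> feas2 \<and> (\<forall>Q\<in>feas2. f (N * Q) \<le> f (N * P))
              \<longrightarrow> N * P \<in> feas1 \<and> (\<forall>W\<in>feas1. f W \<le> f (N * P)))"
proof -
  define n where "n = K + 3 * M"
  define A where "A = steer_mat Nt M a \<theta> \<phi>"
  define Adt where "Adt = dtheta_mat Nt M a \<theta> \<phi>"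
  define Adp where "Adp = dphi_mat Nt M a \<theta> \<phi>"
  define U where "U = diag_mat M \<alpha>"
  have Hd: "dim_row H = Nt" "dim_col H = K" using H by auto
  have Ad: "dim_row A = Nt" "dim_col A = M" "dim_row Adt = Nt" "dim_col Adt = M"
    "dim_row Adp = Nt" "dim_col Adp = M" "dim_row U = M" "dim_col U = M"
    by (simp_all add: A_def Adt_def Adp_def U_def steer_mat_def dtheta_mat_def dphi_mat_def diag_mat_def)
  have Nd: "dim_row N = Nt" "dim_col N = n"
    by (simp_all add: N_def Nmat_def Hd Ad[unfolded A_def Adt_def Adp_def] n_def)
  have NH: "N $$ (i, k) = H $$ (i, k)" if "i < Nt" "k < K" for i k
    using that by (simp add: N_def Nmat_def Hd Ad[unfolded A_def Adt_def Adp_def])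
  have NA: "N $$ (i, K + m) = A $$ (i, m)" if "i < Nt" "m < M" for i m
    using that by (simp add: N_def Nmat_def Hd Ad[unfolded A_def Adt_def Adp_def] A_def)
  have NAdt: "N $$ (i, K + M + m) = Adt $$ (i, m)" if "i < Nt" "m < M" for i m
    using that by (simp add: N_def Nmat_def Hd Ad[unfolded A_def Adt_def Adp_def] Adt_def)
  have NAdp: "N $$ (i, K + 2 * M + m) = Adp $$ (i, m)" if "i < Nt" "m < M" for i m
    using that by (simp add: N_def Nmat_def Hd Ad[unfolded A_def Adt_def Adp_def] Adp_def)
  have Nc: "N \<in> carrier_mat Nt n" using Nd by auto

  have key1: "N * P \<in> feas1" if "P \<in> feas2" for P
  proof -
    have P: "P \<in> carrier_mat n n" "Re (mtrace (P * herm P * herm N * N)) \<le> Pt"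
      "invertible_mat (FIM L ss2 Nt Nr M a b \<theta> \<phi> \<alpha> (N * P))"
      using that by (auto simp: feas2_def n_def)
    show ?thesis using P trace_feas[OF Nc P(1)] Nc unfolding feas1_def n_def by auto
  qed

  have key2: "\<exists>Q\<in>feas2. f (N * Q) = f W" if "W \<in> feas1" for W
  proof -
    have W: "W \<in> carrier_mat Nt n" "Re (mtrace (W * herm W)) \<le> Pt"
      "invertible_mat (FIM L ss2 Nt Nr M a b \<theta> \<phi> \<alpha> W)"
      using that by (auto simp: feas1_def n_def)
    have "\<forall>j. \<exists>c. \<forall>l<n. ip Nt (\<lambda>i. N $$ (i, l)) (\<lambda>i. W $$ (i, j) - (\<Sum>k<n. N $$ (i, k) * c k)) = 0"
      by (intro allI proj_exists)
    from choice[OF this] obtain C where C0: "\<forall>j. \<forall>l<n.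
        ip Nt (\<lambda>i. N $$ (i, l)) (\<lambda>i. W $$ (i, j) - (\<Sum>k<n. N $$ (i, k) * C j k)) = 0"
      by blast
    have C: "ip Nt (\<lambda>i. N $$ (i, l)) (\<lambda>i. W $$ (i, j) - (\<Sum>k<n. N $$ (i, k) * C j k)) = 0"
      if "l < n" for j l using C0 that by blast
    define P where "P = mat n n (\<lambda>(l, j). C j l)"
    have Pc: "P \<in> carrier_mat n n" by (simp add: P_def)
    have NPc: "N * P \<in> carrier_mat Nt n" using Nc Pc by auto
    have NP: "(N * P) $$ (i, j) = (\<Sum>k<n. N $$ (i, k) * C j k)" if "i < Nt" "j < n" for i j
      by (subst mult_entry) (use that Nd in \<open>auto simp: P_def\<close>)
    have orth: "(\<Sum>i<Nt. cnj (N $$ (i, l)) * W $$ (i, j)) = (\<Sum>i<Nt. cnj (N $$ (i, l)) * (N * P) $$ (i, j))"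
      if "l < n" "j < n" for l j
    proof -
      have "0 = (\<Sum>i<Nt. cnj (N $$ (i, l)) * (W $$ (i, j) - (N * P) $$ (i, j)))"
        using C[OF that(1), of j] that unfolding ip_def by (auto simp: NP intro!: sum.cong)
      then show ?thesis by (simp add: right_diff_distrib sum_subtractf)
    qed
    have hE: "herm X * W = herm X * (N * P)"
      if X: "dim_row X = Nt" "dim_col X = M" "off + M \<le> n" "\<And>i m. i < Nt \<Longrightarrow> m < M \<Longrightarrow> X $$ (i, m) = N $$ (i, off + m)"
      for X off
    proof (rule eq_matI)
      fix m j assume mj: "m < dim_row (herm X * (N * P))" "j < dim_col (herm X * (N * P))"
      then have mj': "m < M" "j < n" using X NPc by auto
      have "(herm X * W) $$ (m, j) = (\<Sum>i<Nt. herm X $$ (m, i) * W $$ (i, j))"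
        by (subst mult_entry) (use mj' X W in auto)
      also have "\<dots> = (\<Sum>i<Nt. cnj (N $$ (i, off + m)) * W $$ (i, j))"
        using mj' X by (auto intro!: sum.cong)
      also have "\<dots> = (\<Sum>i<Nt. cnj (N $$ (i, off + m)) * (N * P) $$ (i, j))"
        using orth mj' X by auto
      also have "\<dots> = (\<Sum>i<Nt. herm X $$ (m, i) * (N * P) $$ (i, j))"
        using mj' X by (auto intro!: sum.cong)
      also have "\<dots> = (herm X * (N * P)) $$ (m, j)"
        by (subst mult_entry) (use mj' X NPc in auto)
      finally show "(herm X * W) $$ (m, j) = (herm X * (N * P)) $$ (m, j)" .
    qed (use W NPc in auto)
    have hA: "herm A * W = herm A * (N * P)"
      by (rule hE[of A K]) (use Ad NA n_def in auto)
    have hAdt: "herm Adt * W = herm Adt * (N * P)"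
      by (rule hE[of Adt "K + M"]) (use Ad NAdt n_def in auto)
    have hAdp: "herm Adp * W = herm Adp * (N * P)"
      by (rule hE[of Adp "K + 2 * M"]) (use Ad NAdp n_def in auto)
    have dW: "dim_row W = Nt" "dim_col W = n" "dim_row (N * P) = Nt" "dim_col (N * P) = n"
      using W NPc by auto
    have FIMe: "FIM L ss2 Nt Nr M a b \<theta> \<phi> \<alpha> W = FIM L ss2 Nt Nr M a b \<theta> \<phi> \<alpha> (N * P)"
      unfolding FIM_def Let_def Fdiag_def F12_def F13_def F33_def
        A_def[symmetric] Adt_def[symmetric] Adp_def[symmetric] U_def[symmetric]
      by (simp add: S1 core Ad dW Nd hA hAdt hAdp)
    have hw: "hw H W k j = hw H (N * P) k j" if "k < K" "j < n" for k j
      unfolding hw_def Hd using orth[of k j] that NH by (simp add: n_def)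
    have rate: "rate H sc W k = rate H sc (N * P) k" if "k < K" for k
      unfolding rate_def Hd dW using that hw by (auto simp: n_def intro!: sum.cong arg_cong[where f = ln])
    have fe: "f (N * P) = f W"
      unfolding f_def obj_def Hd FIMe using rate by simp
    have pw: "Re (mtrace (P * herm P * herm N * N)) \<le> Re (mtrace (W * herm W))"
    proof -
      have "Re (mtrace (P * herm P * herm N * N)) = (\<Sum>j<n. Re (ip Nt (\<lambda>i. (N * P) $$ (i, j)) (\<lambda>i. (N * P) $$ (i, j))))"
        unfolding trace_feas[OF Nc Pc] mtrace_herm[OF NPc] Re_sum ..
      also have "\<dots> \<le> (\<Sum>j<n. Re (ip Nt (\<lambda>i. W $$ (i, j)) (\<lambda>i. W $$ (i, j))))"
      proof (rule sum_mono)
        fix j assume j: "j \<in> {..<n}"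
        have "ip Nt (\<lambda>i. (N * P) $$ (i, j)) (\<lambda>i. (N * P) $$ (i, j))
            = ip Nt (\<lambda>i. \<Sum>k<n. N $$ (i, k) * C j k) (\<lambda>i. \<Sum>k<n. N $$ (i, k) * C j k)"
          unfolding ip_def using j by (auto simp: NP intro!: sum.cong)
        also have "Re \<dots> \<le> Re (ip Nt (\<lambda>i. W $$ (i, j)) (\<lambda>i. W $$ (i, j)))"
          by (rule proj_norm[of n Nt "\<lambda>l i. N $$ (i, l)"]) (use C in auto)
        finally show "Re (ip Nt (\<lambda>i. (N * P) $$ (i, j)) (\<lambda>i. (N * P) $$ (i, j)))
            \<le> Re (ip Nt (\<lambda>i. W $$ (i, j)) (\<lambda>i. W $$ (i, j)))" .
      qed
      also have "\<dots> = Re (mtrace (W * herm W))"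
        unfolding mtrace_herm[OF W(1)] Re_sum ..
      finally show ?thesis .
    qed
    have "P \<in> feas2" unfolding feas2_def using Pc pw W FIMe by (auto simp: n_def)
    then show ?thesis using fe by blast
  qed

  have img: "f ` feas1 = (\<lambda>P. f (N * P)) ` feas2"
  proof
    show "f ` feas1 \<subseteq> (\<lambda>P. f (N * P)) ` feas2"
      using key2 by (force simp: image_iff)
    show "(\<lambda>P. f (N * P)) ` feas2 \<subseteq> f ` feas1"
      using key1 by auto
  qed
  show ?thesis
  proof (rule conjI)
    show "Sup (f ` feas1) = Sup ((\<lambda>P. f (N * P)) ` feas2)" using img by simp
  next
    show "\<forall>P. P \<in> feas2 \<and> (\<forall>Q\<in>feas2. f (N * Q) \<le> f (N * P))
              \<longrightarrow> N * P \<in> feas1 \<and> (\<forall>W\<in>feas1. f W \<le> f (N * P))"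
    proof (intro allI impI)
    fix P assume P: "P \<in> feas2 \<and> (\<forall>Q\<in>feas2. f (N * Q) \<le> f (N * P))"
    show "N * P \<in> feas1 \<and> (\<forall>W\<in>feas1. f W \<le> f (N * P))"
    proof
      show "N * P \<in> feas1" using key1 P by blast
      show "\<forall>W\<in>feas1. f W \<le> f (N * P)"
      proof
        fix W assume "W \<in> feas1"
        then obtain Q where "Q \<in> feas2" "f (N * Q) = f W" using key2 by blast
        then show "f W \<le> f (N * P)" using P by metis
      qed
    qed
    qed
  qed
qed


end
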